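(* Let $m\ge 2$ and $\theta_c(\mathrm{Plu},m)=\frac{m-2}{3m-2}$. For $\theta\in(0,1]$: (i) if $\theta<\theta_c(\mathrm{Plu},m)$ then $\lim_{n\to\infty}\rho(\mathrm{Plu},m,n,\theta)=1$; (ii) if $\theta>\theta_c(\mathrm{Plu},m)$ then $\lim_{n\to\infty}\rho(\mathrm{Plu},m,n,\theta)=0$.
   Context: A ranking is a strict total order on the candidates. A discrete profile $P$ consists of candidates, $n$ voters, and a ranking $P_v$ per voter. Plurality ($\mathrm{Plu}$): each candidate $c$ gets score $s_{\mathrm{Plu}}(c,P)$ equal to the number (total weight) of voters ranking $c$ first; the winner is the candidate with the highest score, ties broken by an arbitrary fixed tie-breaking rule (the result holds for any such rule). CM: the rule $f$ is coalitionally manipulable in a discrete profile $P$ if there is a discrete profile $Q$ with the same candidates and voters such that $f(Q)\ne f(P)$ and every voter $v$ with $Q_v\ne P_v$ prefers $f(Q)$ to $f(P)$ according to $P_v$. Perturbed Culture with parameters $m,n\ge1$, $\theta\in(0,1]$: a random discrete profile with candidates $\{1,\dots,m\}$ and voters $\{1,\dots,n\}$, each voter independently having ranking $1\succ 2\succ\cdots\succ m$ with probability $\theta$ and a uniformly random ranking (among the $m!$) with probability $1-\theta$. The CM rate $\rho(f,m,n,\theta)$ is the probability that $f$ is CM in such a random profile. *)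

theory Defs
  imports Complex_Main "HOL-Combinatorics.Multiset_Permutations"
begin

text \<open>Candidates are 1..m. A ranking is a list enumerating all candidates without
repetition; earlier position = more preferred.\<close>

definition rankings :: "nat \<Rightarrow> nat list set" where
  "rankings m = permutations_of_set {1..m}"

definition prefers :: "nat list \<Rightarrow> nat \<Rightarrow> nat \<Rightarrow> bool" where
  "prefers r a b \<longleftrightarrow> (\<exists>i j. i < j \<and> j < length r \<and> r ! i = a \<and> r ! j = b)"

definition profiles :: "nat \<Rightarrow> nat \<Rightarrow> nat list list set" where
  "profiles m n = {P. length P = n \<and> set P \<subseteq> rankings m}"

definition plu_score :: "nat list list \<Rightarrow> nat \<Rightarrow> nat" where
  "plu_score P c = length (filter (\<lambda>r. hd r = c) P)"

definition plu_winner :: "nat list \<Rightarrow> nat list list \<Rightarrow> nat" where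
  "plu_winner tb P =
     hd (filter (\<lambda>c. \<forall>d \<in> set tb. plu_score P d \<le> plu_score P c) tb)"

definition coal_manip :: "(nat list list \<Rightarrow> nat) \<Rightarrow> nat \<Rightarrow> nat list list \<Rightarrow> bool" where
  "coal_manip f m P \<longleftrightarrow>
     (\<exists>Q \<in> profiles m (length P). f Q \<noteq> f P \<and>
        (\<forall>v < length P. Q ! v \<noteq> P ! v \<longrightarrow> prefers (P ! v) (f Q) (f P)))"

definition pc_weight :: "nat \<Rightarrow> real \<Rightarrow> nat list \<Rightarrow> real" where
  "pc_weight m \<theta> r = (if r = [1..<m+1] then \<theta> else 0) + (1 - \<theta>) / fact m"

definition cm_rate :: "(nat list list \<Rightarrow> nat) \<Rightarrow> nat \<Rightarrow> nat \<Rightarrow> real \<Rightarrow> real" where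
  "cm_rate f m n \<theta> =
     (\<Sum>P \<in> {P \<in> profiles m n. coal_manip f m P}. \<Prod>v<n. pc_weight m \<theta> (P ! v))"

definition theta_c_plu :: "nat \<Rightarrow> real" where
  "theta_c_plu m = (real m - 2) / (3 * real m - 2)"

end

theory Submission
  imports Defs
begin
definition LL :: "'a set \<Rightarrow> nat \<Rightarrow> 'a list set" where
  "LL R n = {P. length P = n \<and> set P \<subseteq> R}"

definition EE :: "'a set \<Rightarrow> ('a \<Rightarrow> real) \<Rightarrow> nat \<Rightarrow> ('a list \<Rightarrow> real) \<Rightarrow> real" where
  "EE R w n F = (\<Sum>P\<in>LL R n. (\<Prod>v<n. w (P!v)) * F P)"

lemma finite_LL: "finite R \<Longrightarrow> finite (LL R n)"
  unfolding LL_def using finite_lists_length_eq[of R n] by (simp add: conj_commute)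

lemma LL_Suc: "LL R (Suc n) = (\<lambda>(r,P). r#P) ` (R \<times> LL R n)"
proof (rule set_eqI)
  fix Q
  show "Q \<in> LL R (Suc n) \<longleftrightarrow> Q \<in> (\<lambda>(r,P). r#P) ` (R \<times> LL R n)"
    by (cases Q) (auto simp: LL_def image_iff)
qed

lemma EE_Suc:
  assumes "finite R"
  shows "EE R w (Suc n) F = (\<Sum>r\<in>R. w r * EE R w n (\<lambda>P. F (r#P)))"
proof -
  have inj: "inj_on (\<lambda>(r,P). r#P) (R \<times> LL R n)"
    by (auto simp: inj_on_def)
  have "EE R w (Suc n) F = (\<Sum>(r,P)\<in>R \<times> LL R n. (\<Prod>v<Suc n. w ((r#P)!v)) * F (r#P))"
    unfolding EE_def LL_Suc by (subst sum.reindex[OF inj]) (simp add: case_prod_unfold)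
  also have "\<dots> = (\<Sum>r\<in>R. \<Sum>P\<in>LL R n. (\<Prod>v<Suc n. w ((r#P)!v)) * F (r#P))"
    by (rule sum.cartesian_product[symmetric])
  also have "\<dots> = (\<Sum>r\<in>R. w r * EE R w n (\<lambda>P. F (r#P)))"
    unfolding EE_def prod.lessThan_Suc_shift by (simp add: sum_distrib_left mult.assoc)
  finally show ?thesis .
qed

lemma EE_add: "EE R w n (\<lambda>P. F P + G P) = EE R w n F + EE R w n G"
  unfolding EE_def by (simp add: distrib_left sum.distrib)

lemma EE_cmult: "EE R w n (\<lambda>P. c * F P) = c * EE R w n F"
  unfolding EE_def by (simp add: sum_distrib_left mult.left_commute)

lemma EE_const:
  assumes "finite R" "sum w R = 1"
  shows "EE R w n (\<lambda>_. c) = c"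
proof (induction n)
  case 0
  have "LL R 0 = {[]}" by (auto simp: LL_def)
  then show ?case by (simp add: EE_def)
next
  case (Suc n)
  then show ?case using assms by (simp add: EE_Suc sum_distrib_right[symmetric])
qed

lemma EE_mono:
  assumes "\<And>r. r \<in> R \<Longrightarrow> w r \<ge> 0" "\<And>P. P \<in> LL R n \<Longrightarrow> F P \<le> G P"
  shows "EE R w n F \<le> EE R w n G"
  unfolding EE_def
proof (rule sum_mono)
  fix P assume P: "P \<in> LL R n"
  have "(\<Prod>v<n. w (P!v)) \<ge> 0"
  proof (intro prod_nonneg)
    fix v assume "v \<in> {..<n}"
    then have "P ! v \<in> set P" using P by (simp add: LL_def)
    then show "w (P ! v) \<ge> 0" using P assms(1) by (auto simp: LL_def)
  qed
  then show "(\<Prod>v<n. w (P!v)) * F P \<le> (\<Prod>v<n. w (P!v)) * G P"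
    using assms(2)[OF P] by (simp add: mult_left_mono)
qed

lemma EE_cong:
  assumes "\<And>P. P \<in> LL R n \<Longrightarrow> F P = G P"
  shows "EE R w n F = EE R w n G"
  unfolding EE_def using assms by (intro sum.cong) auto

lemma sum_w_affine:
  fixes w a :: "'a \<Rightarrow> real"
  shows "(\<Sum>r\<in>R. w r * (a r + c)) = (\<Sum>r\<in>R. w r * a r) + c * sum w R"
  by (simp add: distrib_left sum.distrib sum_distrib_left mult.commute)

locale wsp =
  fixes R :: "'a set" and w :: "'a \<Rightarrow> real"
  assumes finR: "finite R" and wnn: "\<And>r. r \<in> R \<Longrightarrow> w r \<ge> 0" and wsum: "sum w R = 1"
begin

lemma Y_mean:
  assumes "\<mu> = (\<Sum>r\<in>R. w r * g r)"
  shows "EE R w n (\<lambda>P. sum_list (map (\<lambda>x. g x - \<mu>) P)) = 0"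
proof (induction n)
  case 0
  have "LL R 0 = {[]}" by (auto simp: LL_def)
  then show ?case by (simp add: EE_def)
next
  case (Suc n)
  have "EE R w (Suc n) (\<lambda>P. sum_list (map (\<lambda>x. g x - \<mu>) P))
      = (\<Sum>r\<in>R. w r * EE R w n (\<lambda>P. (g r - \<mu>) + sum_list (map (\<lambda>x. g x - \<mu>) P)))"
    by (simp add: EE_Suc finR)
  also have "\<dots> = (\<Sum>r\<in>R. w r * (g r - \<mu>))"
    by (simp add: EE_add EE_const finR wsum Suc)
  also have "\<dots> = (\<Sum>r\<in>R. w r * g r) + (-\<mu>) * sum w R"
    using sum_w_affine[of w g "-\<mu>" R] by simp
  also have "\<dots> = \<mu> - \<mu> * sum w R"
    by (simp add: assms)
  also have "\<dots> = 0" by (simp add: wsum)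
  finally show ?case .
qed

lemma Y_var:
  assumes "\<mu> = (\<Sum>r\<in>R. w r * g r)"
  shows "EE R w n (\<lambda>P. (sum_list (map (\<lambda>x. g x - \<mu>) P))^2) = real n * (\<Sum>r\<in>R. w r * (g r - \<mu>)^2)"
proof (induction n)
  case 0
  have "LL R 0 = {[]}" by (auto simp: LL_def)
  then show ?case by (simp add: EE_def)
next
  case (Suc n)
  define Y where "Y = (\<lambda>P. sum_list (map (\<lambda>x. g x - \<mu>) P))"
  define V where "V = (\<Sum>r\<in>R. w r * (g r - \<mu>)^2)"
  have "EE R w (Suc n) (\<lambda>P. (Y P)^2)
      = (\<Sum>r\<in>R. w r * EE R w n (\<lambda>P. (g r - \<mu>)^2 + (2 * (g r - \<mu>) * Y P + (Y P)^2)))"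
    by (simp add: EE_Suc finR Y_def power2_eq_square algebra_simps)
  also have "\<dots> = (\<Sum>r\<in>R. w r * ((g r - \<mu>)^2 + real n * V))"
    using Suc Y_mean[OF assms, of n]
    by (simp add: EE_add EE_cmult EE_const finR wsum Y_def V_def)
  also have "\<dots> = V + real n * V * sum w R"
    by (simp add: sum_w_affine V_def)
  also have "\<dots> = real (Suc n) * V" by (simp add: wsum algebra_simps)
  finally show ?case by (simp add: Y_def V_def)
qed

lemma sum_list_shift:
  "sum_list (map (\<lambda>x. g x - \<mu>) P) = sum_list (map g P) - real (length P) * \<mu>"
  by (induction P) (auto simp: algebra_simps)

lemma bad_bound:
  assumes "\<mu> = (\<Sum>r\<in>R. w r * g r)" "\<mu> > 0" "n > 0"
  shows "EE R w n (\<lambda>P. if sum_list (map g P) \<le> 0 then 1 else 0)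
          \<le> (\<Sum>r\<in>R. w r * (g r - \<mu>)^2) / \<mu>^2 / real n"
proof -
  define Y where "Y = (\<lambda>P. sum_list (map (\<lambda>x. g x - \<mu>) P))"
  define t where "t = real n * \<mu>"
  have t: "t > 0" using assms by (simp add: t_def)
  have "EE R w n (\<lambda>P. if sum_list (map g P) \<le> 0 then 1 else 0) \<le> EE R w n (\<lambda>P. (1/t^2) * (Y P)^2)"
  proof (rule EE_mono[OF wnn])
    fix P assume P: "P \<in> LL R n"
    show "(if sum_list (map g P) \<le> 0 then 1 else 0) \<le> (1/t^2) * (Y P)^2"
    proof (cases "sum_list (map g P) \<le> 0")
      case True
      then have "Y P \<le> - t" using P by (simp add: Y_def sum_list_shift LL_def t_def)
      then have "t^2 \<le> (Y P)^2" using t power_mono[of t "- Y P" 2] by simp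
      then show ?thesis using True t by (simp add: field_simps)
    qed auto
  qed
  also have "\<dots> = (1/t^2) * (real n * (\<Sum>r\<in>R. w r * (g r - \<mu>)^2))"
    by (subst EE_cmult) (simp add: Y_def Y_var[OF assms(1)])
  also have "\<dots> = (\<Sum>r\<in>R. w r * (g r - \<mu>)^2) / \<mu>^2 / real n"
    using assms by (simp add: t_def field_simps power2_eq_square)
  finally show ?thesis .
qed

lemma bad_tendsto:
  assumes "\<mu> = (\<Sum>r\<in>R. w r * g r)" "\<mu> > 0"
  shows "(\<lambda>n. EE R w n (\<lambda>P. if sum_list (map g P) \<le> 0 then 1 else 0)) \<longlonglongrightarrow> 0"
proof (rule tendsto_sandwich[where f="\<lambda>_. 0"])
  show "\<forall>\<^sub>F n in sequentially. 0 \<le> EE R w n (\<lambda>P. if sum_list (map g P) \<le> 0 then 1 else 0)"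
  proof (intro always_eventually allI)
    fix n
    have "EE R w n (\<lambda>_. 0) \<le> EE R w n (\<lambda>P. if sum_list (map g P) \<le> 0 then 1 else 0)"
      by (rule EE_mono[OF wnn]) auto
    then show "0 \<le> EE R w n (\<lambda>P. if sum_list (map g P) \<le> 0 then 1 else (0::real))"
      by (simp add: EE_const[OF finR wsum])
  qed
  show "\<forall>\<^sub>F n in sequentially. EE R w n (\<lambda>P. if sum_list (map g P) \<le> 0 then 1 else 0)
        \<le> (\<Sum>r\<in>R. w r * (g r - \<mu>)^2) / \<mu>^2 / real n"
    using eventually_gt_at_top[of 0] by eventually_elim (rule bad_bound[OF assms])
  show "(\<lambda>n. (\<Sum>r\<in>R. w r * (g r - \<mu>)^2) / \<mu>^2 / real n) \<longlonglongrightarrow> 0"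
    by (rule lim_const_over_n)
qed simp

end

lemma rank_facts:
  assumes "r \<in> rankings m" shows "distinct r" "set r = {1..m}"
  using assms by (auto simp: rankings_def permutations_of_set_def)

lemma pref_hd:
  assumes "distinct r" "r \<noteq> []" "hd r = a" "prefers r b a" shows False
proof -
  obtain i j where ij: "i < j" "j < length r" "r ! i = b" "r ! j = a"
    using assms(4) by (auto simp: prefers_def)
  have "r ! 0 = a" using assms(2,3) by (simp add: hd_conv_nth)
  then have "j = 0" using ij assms(1,2) nth_eq_iff_index_eq[of r j 0] by auto
  then show False using ij by simp
qed

lemma hd_pref:
  assumes "r \<noteq> []" "hd r = a" "b \<in> set r" "b \<noteq> a" shows "prefers r a b"
proof -
  obtain j where j: "j < length r" "r ! j = b" using assms(3) by (auto simp: in_set_conv_nth)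
  have "r ! 0 = a" using assms(1,2) by (simp add: hd_conv_nth)
  then have "0 < j" using j assms(4) by (cases j) auto
  then show ?thesis unfolding prefers_def using j \<open>r ! 0 = a\<close> \<open>0 < j\<close> by (intro exI[of _ 0] exI[of _ j]) auto
qed

lemma winner_props:
  assumes "tb \<noteq> []"
  shows "plu_winner tb P \<in> set tb \<and> (\<forall>d\<in>set tb. plu_score P d \<le> plu_score P (plu_winner tb P))"
proof -
  define M where "M = Max (plu_score P ` set tb)"
  have "M \<in> plu_score P ` set tb" unfolding M_def using assms by (intro Max_in) auto
  then obtain c where c: "c \<in> set tb" "plu_score P c = M" by auto
  have le: "\<forall>d\<in>set tb. plu_score P d \<le> M" unfolding M_def by auto
  let ?F = "filter (\<lambda>c. \<forall>d \<in> set tb. plu_score P d \<le> plu_score P c) tb"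
  have "c \<in> set ?F" using c le by auto
  then have "?F \<noteq> []" by (metis empty_iff empty_set)
  then have "hd ?F \<in> set ?F" by (rule hd_in_set)
  then show ?thesis unfolding plu_winner_def by auto
qed

lemma winner_eq:
  assumes "tb \<in> rankings m" "c \<in> {1..m}"
    "\<And>d. d \<in> {1..m} \<Longrightarrow> d \<noteq> c \<Longrightarrow> plu_score P d < plu_score P c"
  shows "plu_winner tb P = c"
proof -
  have st: "set tb = {1..m}" using rank_facts[OF assms(1)] by simp
  then have "tb \<noteq> []" using assms(2) by auto
  note wp = winner_props[OF this, of P]
  show ?thesis
  proof (rule ccontr)
    assume ne: "plu_winner tb P \<noteq> c"
    have "plu_score P c \<le> plu_score P (plu_winner tb P)" using wp st assms(2) by auto
    moreover have "plu_score P (plu_winner tb P) < plu_score P c"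
      using assms(3)[OF _ ne] wp st by auto
    ultimately show False by simp
  qed
qed

lemma score_card: "plu_score P c = card {v. v < length P \<and> hd (P!v) = c}"
  unfolding plu_score_def by (rule length_filter_conv_card)

lemma prof_nth: "P \<in> profiles m n \<Longrightarrow> v < length P \<Longrightarrow> P ! v \<in> rankings m"
  unfolding profiles_def by auto

lemma rank_ne: "r \<in> rankings m \<Longrightarrow> m \<ge> 1 \<Longrightarrow> r \<noteq> []"
  using rank_facts(2)[of r m] by auto

lemma notCM:
  assumes m: "m \<ge> 2" and tb: "tb \<in> rankings m" and P: "P \<in> profiles m n"
    and H: "\<forall>c\<in>{2..m}. plu_score P c < plu_score P 1 \<and>
                length (filter (\<lambda>r. prefers r c 1) P) < plu_score P 1"
  shows "\<not> coal_manip (plu_winner tb) m P"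
proof
  have fP: "plu_winner tb P = 1"
    using m H by (intro winner_eq[OF tb]) auto
  assume "coal_manip (plu_winner tb) m P"
  then obtain Q where Q: "Q \<in> profiles m (length P)" "plu_winner tb Q \<noteq> 1"
    and ch: "\<forall>v < length P. Q ! v \<noteq> P ! v \<longrightarrow> prefers (P ! v) (plu_winner tb Q) 1"
    unfolding coal_manip_def fP by blast
  define c where "c = plu_winner tb Q"
  have st: "set tb = {1..m}" using rank_facts[OF tb] by simp
  then have tbne: "tb \<noteq> []" using m by auto
  note wp = winner_props[OF tbne, of Q]
  have c: "c \<in> {2..m}" using wp st Q(2) unfolding c_def by auto
  have lQ: "length Q = length P" using Q(1) by (simp add: profiles_def)
  have h1: "plu_score Q c \<le> length (filter (\<lambda>r. prefers r c 1) P)"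
    unfolding score_card length_filter_conv_card[of _ P]
  proof (rule card_mono)
    show "{v. v < length Q \<and> hd (Q ! v) = c} \<subseteq> {i. i < length P \<and> prefers (P ! i) c 1}"
    proof safe
      fix v assume v: "v < length Q" "c = hd (Q ! v)"
      show "v < length P" using v lQ by simp
      show "prefers (P ! v) (hd (Q ! v)) 1"
      proof (cases "Q ! v = P ! v")
        case True
        have r: "P ! v \<in> rankings m" using prof_nth[OF P] v lQ by simp
        show ?thesis using True v c rank_ne[OF r] rank_facts(2)[OF r] m
          by (intro hd_pref) auto
      next
        case False
        then show ?thesis using ch v lQ unfolding c_def by auto
      qed
    qed
  qed simp
  have h2: "plu_score P 1 \<le> plu_score Q 1"
    unfolding score_card
  proof (rule card_mono)
    show "{v. v < length P \<and> hd (P ! v) = 1} \<subseteq> {v. v < length Q \<and> hd (Q ! v) = 1}"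
    proof safe
      fix v assume v: "v < length P" "hd (P ! v) = 1"
      show "v < length Q" using v lQ by simp
      have r: "P ! v \<in> rankings m" using prof_nth[OF P] v by simp
      have "Q ! v = P ! v"
      proof (rule ccontr)
        assume "Q ! v \<noteq> P ! v"
        then have "prefers (P ! v) c 1" using ch v unfolding c_def by auto
        then show False using pref_hd[OF rank_facts(1)[OF r] rank_ne[OF r] v(2)] m by auto
      qed
      then show "hd (Q ! v) = 1" using v by simp
    qed
  qed simp
  have h3: "plu_score Q 1 \<le> plu_score Q c" using wp st m unfolding c_def by auto
  have "length (filter (\<lambda>r. prefers r c 1) P) < plu_score P 1" using H c by blast
  then show False using h1 h2 h3 by linarith
qed

lemma exists_hd2:
  assumes "m \<ge> 2" shows "\<exists>r \<in> rankings m. hd r = 2"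
proof -
  define r where "r = 2 # filter (\<lambda>x. x \<noteq> 2) [1..<m+1]"
  have "r \<in> rankings m" unfolding rankings_def r_def using assms
    by (intro permutations_of_setI) auto
  moreover have "hd r = 2" by (simp add: r_def)
  ultimately show ?thesis by blast
qed

lemma isCM:
  assumes m: "m \<ge> 2" and tb: "tb \<in> rankings m" and P: "P \<in> profiles m n"
    and H1: "\<forall>c\<in>{2..m}. plu_score P c < plu_score P 1"
    and H2: "plu_score P 1 < length (filter (\<lambda>r. prefers r 2 1) P)"
  shows "coal_manip (plu_winner tb) m P"
proof -
  obtain r2 where r2: "r2 \<in> rankings m" "hd r2 = 2" using exists_hd2[OF m] by blast
  define Q where "Q = map (\<lambda>r. if prefers r 2 1 then r2 else r) P"
  have lQ: "length Q = length P" by (simp add: Q_def)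
  have Qv: "Q ! v = (if prefers (P!v) 2 1 then r2 else P!v)" if "v < length P" for v
    using that by (simp add: Q_def)
  have QP: "Q \<in> profiles m (length P)"
    using P r2 by (auto simp: Q_def profiles_def)
  have fP: "plu_winner tb P = 1"
    using m H1 by (intro winner_eq[OF tb]) auto
  have a: "length (filter (\<lambda>r. prefers r 2 1) P) \<le> plu_score Q 2"
    unfolding score_card length_filter_conv_card[of _ P]
    by (rule card_mono) (auto simp: lQ Qv r2)
  have b: "plu_score Q d \<le> plu_score P d" if "d \<noteq> 2" for d
    unfolding score_card
    by (rule card_mono) (use that r2 in \<open>auto simp: lQ Qv split: if_splits\<close>)
  have fQ: "plu_winner tb Q = 2"
  proof (rule winner_eq[OF tb])
    show "2 \<in> {1..m}" using m by simp
    fix d assume d: "d \<in> {1..m}" "d \<noteq> 2"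
    have "plu_score P d \<le> plu_score P 1"
      using H1 d by (cases "d = 1") (auto intro: less_imp_le)
    then show "plu_score Q d < plu_score Q 2" using a b[OF d(2)] H2 by linarith
  qed
  show ?thesis unfolding coal_manip_def
    by (rule bexI[OF _ QP]) (auto simp: fP fQ Qv)
qed

lemma id_rank: "[1..<m+1] \<in> rankings m"
  unfolding rankings_def by (intro permutations_of_setI) auto

lemma card_R: "card (rankings m) = fact m"
  unfolding rankings_def by simp

lemma finite_R: "finite (rankings m)"
  unfolding rankings_def by simp

lemma count_ind: "finite A \<Longrightarrow> (\<Sum>r\<in>A. (if p r then 1 else 0)::real) = real (card {r\<in>A. p r})"
  by (simp add: sum.inter_filter[symmetric])

lemma mean_ind:
  "(\<Sum>r\<in>rankings m. pc_weight m \<theta> r * (if p r then 1 else 0))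
     = (if p [1..<m+1] then \<theta> else 0) + (1-\<theta>)/fact m * real (card {r\<in>rankings m. p r})"
proof -
  have "(\<Sum>r\<in>rankings m. pc_weight m \<theta> r * (if p r then 1 else 0))
     = (\<Sum>r\<in>rankings m. (if r = [1..<m+1] then \<theta> * (if p r then 1 else 0) else 0)
          + (1-\<theta>)/fact m * (if p r then 1 else 0))"
    by (intro sum.cong) (auto simp: pc_weight_def)
  also have "\<dots> = (\<Sum>r\<in>rankings m. (if r = [1..<m+1] then \<theta> * (if p r then 1 else 0) else 0))
          + (\<Sum>r\<in>rankings m. (1-\<theta>)/fact m * (if p r then 1 else 0))"
    by (rule sum.distrib)
  also have "(\<Sum>r\<in>rankings m. (if r = [1..<m+1] then \<theta> * (if p r then 1 else 0) else 0))
      = \<theta> * (if p [1..<m+1] then 1 else 0)"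
    by (subst sum.delta[OF finite_R]) (simp only: id_rank if_True)
  also have "(\<Sum>r\<in>rankings m. (1-\<theta>)/fact m * (if p r then 1 else 0))
      = (1-\<theta>)/fact m * real (card {r\<in>rankings m. p r})"
    by (simp only: sum_distrib_left[symmetric] count_ind[OF finite_R])
  also have "\<theta> * (if p [1..<m+1] then 1 else 0) = (if p [1..<m+1] then \<theta> else 0)"
    by simp
  finally show ?thesis .
qed

lemma mean_ind':
  assumes "p [1..<m+1] = b"
  shows "(\<Sum>r\<in>rankings m. pc_weight m \<theta> r * (if p r then 1 else 0))
     = (if b then \<theta> else 0) + (1-\<theta>)/fact m * real (card {r\<in>rankings m. p r})"
  by (simp only: mean_ind assms)

lemma wsp_pc: "0 \<le> \<theta> \<Longrightarrow> \<theta> \<le> 1 \<Longrightarrow> wsp (rankings m) (pc_weight m \<theta>)"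
proof
  assume t: "0 \<le> \<theta>" "\<theta> \<le> 1"
  show "finite (rankings m)" by (rule finite_R)
  show "0 \<le> pc_weight m \<theta> r" for r using t by (simp add: pc_weight_def)
  have "sum (pc_weight m \<theta>) (rankings m) = (\<Sum>r\<in>rankings m. pc_weight m \<theta> r * (if True then 1 else 0))"
    by simp
  also have "\<dots> = 1" using t by (simp only: mean_ind[of m \<theta> "\<lambda>_. True"] card_R) (simp add: card_R)
  finally show "sum (pc_weight m \<theta>) (rankings m) = 1" .
qed

lemma card_hd:
  assumes "c \<in> {1..m}" shows "card {r\<in>rankings m. hd r = c} = fact (m-1)"
proof -
  have eq: "{r\<in>rankings m. hd r = c} = (\<lambda>t. c # t) ` permutations_of_set ({1..m}-{c})"
  proof (rule set_eqI, rule iffI)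
    fix r assume "r \<in> {r\<in>rankings m. hd r = c}"
    then have r: "r \<in> rankings m" "hd r = c" by auto
    have "c \<in> set r" using rank_facts(2)[OF r(1)] assms by simp
    then have "r \<noteq> []" by auto
    then obtain t where t: "r = c # t" using r(2) by (cases r) auto
    have "distinct (c # t)" "set (c # t) = {1..m}" using rank_facts[OF r(1)] t by simp_all
    then have "set t = {1..m} - {c}" "distinct t" by auto
    then have "t \<in> permutations_of_set ({1..m}-{c})" by (intro permutations_of_setI)
    then show "r \<in> (\<lambda>t. c # t) ` permutations_of_set ({1..m}-{c})" using t by blast
  next
    fix r assume "r \<in> (\<lambda>t. c # t) ` permutations_of_set ({1..m}-{c})"
    then obtain t where t: "r = c # t" "t \<in> permutations_of_set ({1..m}-{c})" by blast
    then have "set t = {1..m} - {c}" "distinct t" by (auto dest: permutations_of_setD)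
    then have "set (c # t) = {1..m}" "distinct (c # t)" using assms by (simp_all add: insert_absorb)
    then have "c # t \<in> rankings m" unfolding rankings_def by (intro permutations_of_setI)
    then show "r \<in> {r\<in>rankings m. hd r = c}" using t by simp
  qed
  have "card {r\<in>rankings m. hd r = c} = card (permutations_of_set ({1..m}-{c}))"
    unfolding eq by (rule card_image) (auto simp: inj_on_def)
  also have "\<dots> = fact (card ({1..m}-{c}))" by simp
  also have "card ({1..m}-{c}) = m - 1" using assms by (simp add: card_Diff_singleton)
  finally show ?thesis .
qed

definition sw :: "nat \<Rightarrow> nat \<Rightarrow> nat \<Rightarrow> nat" where
  "sw a b x = (if x = a then b else if x = b then a else x)"

lemma sw_sw: "sw a b (sw a b x) = x" by (simp add: sw_def)

lemma card_pref_le: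
  assumes a: "a \<in> {1..m}" and b: "b \<in> {1..m}" and ab: "a \<noteq> b"
  shows "card {r\<in>rankings m. prefers r a b} \<le> card {r\<in>rankings m. prefers r b a}"
proof (rule card_inj_on_le[where f="map (sw a b)"])
  show "inj_on (map (sw a b)) {r\<in>rankings m. prefers r a b}"
  proof (rule inj_onI)
    fix x y assume "map (sw a b) x = map (sw a b) y"
    then have "map (sw a b) (map (sw a b) x) = map (sw a b) (map (sw a b) y)" by simp
    then show "x = y" by (simp add: sw_sw comp_def)
  qed
  show "finite {r\<in>rankings m. prefers r b a}" using finite_R by simp
  show "map (sw a b) ` {r\<in>rankings m. prefers r a b} \<subseteq> {r\<in>rankings m. prefers r b a}"
  proof safe
    fix r assume r: "r \<in> rankings m" "prefers r a b"
    have inj: "inj (sw a b)" by (metis injI sw_sw)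
    have "sw a b ` {1..m} = {1..m}" using a b by (auto simp: sw_def image_iff)
    then show "map (sw a b) r \<in> rankings m"
      using rank_facts[OF r(1)] inj unfolding rankings_def
      by (intro permutations_of_setI) (auto simp: distinct_map inj_on_subset[OF inj subset_UNIV])
    obtain i j where ij: "i < j" "j < length r" "r ! i = a" "r ! j = b"
      using r(2) by (auto simp: prefers_def)
    show "prefers (map (sw a b) r) b a" unfolding prefers_def
      using ij ab by (intro exI[of _ i] exI[of _ j]) (auto simp: sw_def)
  qed
qed

lemma pref_split:
  assumes r: "r \<in> rankings m" and a: "a \<in> {1..m}" and b: "b \<in> {1..m}" and ab: "a \<noteq> b"
  shows "prefers r a b \<longleftrightarrow> \<not> prefers r b a"
proof
  assume p1: "prefers r a b"
  show "\<not> prefers r b a"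
  proof
    assume p2: "prefers r b a"
    obtain i j where ij: "i < j" "j < length r" "r ! i = a" "r ! j = b"
      using p1 by (auto simp: prefers_def)
    obtain k l where kl: "k < l" "l < length r" "r ! k = b" "r ! l = a"
      using p2 by (auto simp: prefers_def)
    have d: "distinct r" using rank_facts[OF r] by simp
    have "i = l" using ij kl d nth_eq_iff_index_eq[of r i l] by auto
    moreover have "j = k" using ij kl d nth_eq_iff_index_eq[of r j k] by auto
    ultimately show False using ij kl by simp
  qed
next
  assume np: "\<not> prefers r b a"
  obtain i where i: "i < length r" "r ! i = a" using a rank_facts(2)[OF r]
    by (metis in_set_conv_nth)
  obtain j where j: "j < length r" "r ! j = b" using b rank_facts(2)[OF r]
    by (metis in_set_conv_nth)
  have "i \<noteq> j" using i j ab by auto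
  show "prefers r a b"
  proof (cases "i < j")
    case True then show ?thesis unfolding prefers_def using i j by blast
  next
    case False
    then have "j < i" using \<open>i \<noteq> j\<close> by simp
    then have "prefers r b a" unfolding prefers_def using i j by blast
    then show ?thesis using np by simp
  qed
qed

lemma card_pref:
  assumes a: "a \<in> {1..m}" and b: "b \<in> {1..m}" and ab: "a \<noteq> b"
  shows "2 * card {r\<in>rankings m. prefers r a b} = fact m"
proof -
  have e: "card {r\<in>rankings m. prefers r a b} = card {r\<in>rankings m. prefers r b a}"
    using card_pref_le[OF a b ab] card_pref_le[OF b a ab[symmetric]] by simp
  have "rankings m = {r\<in>rankings m. prefers r a b} \<union> {r\<in>rankings m. prefers r b a}"
    using pref_split[OF _ a b ab] by auto
  then have "card (rankings m) = card {r\<in>rankings m. prefers r a b} + card {r\<in>rankings m. prefers r b a}"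
  proof -
    have "{r\<in>rankings m. prefers r a b} \<inter> {r\<in>rankings m. prefers r b a} = {}"
      using pref_split[OF _ a b ab] by blast
    then show "card (rankings m) = card {r\<in>rankings m. prefers r a b} + card {r\<in>rankings m. prefers r b a}"
      using \<open>rankings m = _\<close> finite_R
      by (metis (no_types, lifting) card_Un_disjoint finite_Un)
  qed
  then show ?thesis using e card_R by simp
qed

lemma mean_hd:
  assumes "m \<ge> 1" "c \<in> {1..m}"
  shows "(\<Sum>r\<in>rankings m. pc_weight m \<theta> r * (if hd r = c then 1 else 0))
        = (if c = 1 then \<theta> else 0) + (1-\<theta>)/m"
proof -
  have h: "hd [1..<m+1] = 1" using assms(1) by (subst upt_conv_Cons) auto
  have f: "fact m = real m * fact (m-1)" using assms(1) fact_reduce[of m] by simp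
  have "hd [1..<m+1] = c \<longleftrightarrow> c = 1" using h by auto
  note mi = mean_ind'[of "\<lambda>r. hd r = c", OF this]
  show ?thesis using assms
    by (simp only: mi card_hd) (simp add: f)
qed

lemma not_pref_id: "\<not> prefers [1..<m+1] c 1"
  unfolding prefers_def by (auto simp del: upt_Suc simp add: nth_upt)

lemma mean_pref:
  assumes "c \<in> {2..m}"
  shows "(\<Sum>r\<in>rankings m. pc_weight m \<theta> r * (if prefers r c 1 then 1 else 0)) = (1-\<theta>)/2"
proof -
  have "2 * card {r\<in>rankings m. prefers r c 1} = fact m"
    using assms by (intro card_pref) auto
  then have "real (card {r\<in>rankings m. prefers r c 1}) = fact m / 2"
  proof -
    have "2 * real (card {r\<in>rankings m. prefers r c 1}) = fact m"
      using \<open>2 * card {r\<in>rankings m. prefers r c 1} = fact m\<close>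
      by (metis of_nat_fact of_nat_mult of_nat_numeral)
    then show ?thesis by simp
  qed
  have npi: "prefers [1..<m+1] c 1 = False" using not_pref_id[of m c] by blast
  note mi = mean_ind'[of "\<lambda>r. prefers r c 1" m False, OF npi]
  then show ?thesis by (simp only: mi \<open>real (card {r\<in>rankings m. prefers r c 1}) = fact m / 2\<close>) simp
qed

lemma EE_sum: "EE R w n (\<lambda>P. \<Sum>i\<in>I. F i P) = (\<Sum>i\<in>I. EE R w n (F i))"
  unfolding EE_def by (simp add: sum_distrib_left sum.swap[of _ I])

context wsp begin

lemma good_tendsto:
  fixes g :: "'i \<Rightarrow> 'a \<Rightarrow> real" and A :: "'a list \<Rightarrow> bool"
  assumes I: "finite I" and mu: "\<And>i. i \<in> I \<Longrightarrow> (\<Sum>r\<in>R. w r * g i r) > 0"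
    and imp: "\<And>n P. P \<in> LL R n \<Longrightarrow> (\<forall>i\<in>I. sum_list (map (g i) P) > 0) \<Longrightarrow> A P"
  shows "(\<lambda>n. EE R w n (\<lambda>P. if A P then 0 else 1)) \<longlonglongrightarrow> 0"
proof (rule tendsto_sandwich[where f="\<lambda>_. 0"])
  show "\<forall>\<^sub>F n in sequentially. 0 \<le> EE R w n (\<lambda>P. if A P then 0 else 1)"
  proof (intro always_eventually allI)
    fix n
    have "EE R w n (\<lambda>_. 0) \<le> EE R w n (\<lambda>P. if A P then 0 else 1)"
      by (rule EE_mono[OF wnn]) auto
    then show "0 \<le> EE R w n (\<lambda>P. if A P then 0 else (1::real))"
      by (simp add: EE_const[OF finR wsum])
  qed
  show "\<forall>\<^sub>F n in sequentially. EE R w n (\<lambda>P. if A P then 0 else 1)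
      \<le> (\<Sum>i\<in>I. EE R w n (\<lambda>P. if sum_list (map (g i) P) \<le> 0 then 1 else 0))"
  proof (intro always_eventually allI)
    fix n
    have "EE R w n (\<lambda>P. if A P then 0 else 1)
        \<le> EE R w n (\<lambda>P. \<Sum>i\<in>I. (if sum_list (map (g i) P) \<le> 0 then 1 else 0))"
    proof (rule EE_mono[OF wnn])
      fix P assume P: "P \<in> LL R n"
      show "(if A P then 0 else 1) \<le> (\<Sum>i\<in>I. (if sum_list (map (g i) P) \<le> 0 then 1 else 0::real))"
      proof (cases "A P")
        case True then show ?thesis by (simp add: sum_nonneg)
      next
        case False
        then obtain i where i: "i \<in> I" "sum_list (map (g i) P) \<le> 0"
          using imp[OF P] by force
        have "(if sum_list (map (g i) P) \<le> 0 then 1 else 0::real)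
            \<le> (\<Sum>i\<in>I. (if sum_list (map (g i) P) \<le> 0 then 1 else 0::real))"
          by (rule member_le_sum[OF i(1)]) (auto simp: I)
        then show ?thesis using False i by simp
      qed
    qed
    then show "EE R w n (\<lambda>P. if A P then 0 else 1)
      \<le> (\<Sum>i\<in>I. EE R w n (\<lambda>P. if sum_list (map (g i) P) \<le> 0 then 1 else 0))"
      by (simp only: EE_sum)
  qed
  show "(\<lambda>n. \<Sum>i\<in>I. EE R w n (\<lambda>P. if sum_list (map (g i) P) \<le> 0 then 1 else 0)) \<longlonglongrightarrow> 0"
    by (rule tendsto_null_sum) (rule bad_tendsto[OF refl mu])
qed simp

lemma compl_EE: "EE R w n (\<lambda>P. if A P then 1 else 0) = 1 - EE R w n (\<lambda>P. if A P then 0 else 1)"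
proof -
  have "EE R w n (\<lambda>P. (if A P then 1 else 0) + (if A P then 0 else 1)) = EE R w n (\<lambda>_. 1)"
    by (rule EE_cong) simp
  then show ?thesis by (simp add: EE_add EE_const[OF finR wsum])
qed

end

lemma sum_list_ind: "sum_list (map (\<lambda>r. if p r then 1 else 0) P) = (real (length (filter p P)))"
  by (induction P) auto

lemma sum_list_diff: "sum_list (map (\<lambda>x. f x - h x) P) = sum_list (map f P) - (sum_list (map h P) :: real)"
  by (induction P) auto

lemma sum_w_diff: "(\<Sum>r\<in>R. w r * (f r - h r)) = (\<Sum>r\<in>R. w r * f r) - (\<Sum>r\<in>R. w r * (h r :: real))"
  by (simp add: right_diff_distrib sum_subtractf)

lemma LL_prof: "LL (rankings m) n = profiles m n"
  unfolding LL_def profiles_def by simp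

lemma cm_EE: "cm_rate f m n \<theta> = EE (rankings m) (pc_weight m \<theta>) n (\<lambda>P. if coal_manip f m P then 1 else 0)"
proof -
  have fin: "finite (profiles m n)" using finite_LL[OF finite_R, of m n] by (simp add: LL_prof)
  show ?thesis
    unfolding cm_rate_def EE_def LL_prof sum.inter_filter[OF fin] by (intro sum.cong) auto
qed

theorem theorem3p3:
  fixes m :: nat and \<theta> :: real and tb :: "nat list"
  assumes "m \<ge> 2" and "0 < \<theta>" and "\<theta> \<le> 1" and "tb \<in> rankings m"
  shows "(\<theta> < theta_c_plu m \<longrightarrow> (\<lambda>n. cm_rate (plu_winner tb) m n \<theta>) \<longlonglongrightarrow> 1)
       \<and> (\<theta> > theta_c_plu m \<longrightarrow> (\<lambda>n. cm_rate (plu_winner tb) m n \<theta>) \<longlonglongrightarrow> 0)"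
proof -
  note m = assms(1) and tb = assms(4)
  define R where "R = rankings m"
  define w where "w = pc_weight m \<theta>"
  interpret wsp R w unfolding R_def w_def using assms by (intro wsp_pc) auto
  define hI :: "nat \<Rightarrow> nat list \<Rightarrow> real" where "hI c r = (if hd r = c then 1 else 0)" for c r
  define pI :: "nat \<Rightarrow> nat list \<Rightarrow> real" where "pI c r = (if prefers r c 1 then 1 else 0)" for c r
  have mh: "(\<Sum>r\<in>R. w r * hI c r) = (if c = 1 then \<theta> else 0) + (1-\<theta>)/m" if "c \<in> {1..m}" for c
    unfolding R_def w_def hI_def using mean_hd[of m c \<theta>] that m by simp
  have mp: "(\<Sum>r\<in>R. w r * pI c r) = (1-\<theta>)/2" if "c \<in> {2..m}" for c
    unfolding R_def w_def pI_def using mean_pref[of c m \<theta>] that by simp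
  have sh: "sum_list (map (hI c) P) = real (plu_score P c)" for P c
    unfolding hI_def plu_score_def by (rule sum_list_ind)
  have sp: "sum_list (map (pI c) P) = real (length (filter (\<lambda>r. prefers r c 1) P))" for P c
    unfolding pI_def by (rule sum_list_ind)
  have mpos: "real m > 0" using m by simp
  have d1: "3 * real m - 2 > 0" using m by simp
  have cm: "cm_rate (plu_winner tb) m n \<theta> = EE R w n (\<lambda>P. if coal_manip (plu_winner tb) m P then 1 else 0)" for n
    unfolding R_def w_def by (rule cm_EE)
  have LLp: "LL R n = profiles m n" for n unfolding R_def by (rule LL_prof)
  have diff1: "(\<Sum>r\<in>R. w r * (hI 1 r - hI c r)) = \<theta>" if "c \<in> {2..m}" for c
    using that m by (simp add: sum_w_diff mh)
  show ?thesis
  proof (intro conjI impI)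
    assume lt: "\<theta> < theta_c_plu m"
    then have key: "\<theta> * (3 * real m - 2) < real m - 2"
      unfolding theta_c_plu_def using d1 by (simp add: pos_less_divide_eq)
    define g :: "nat \<Rightarrow> nat list \<Rightarrow> real" where
      "g i = (if i = 1 then (\<lambda>r. pI 2 r - hI 1 r) else (\<lambda>r. hI 1 r - hI i r))" for i
    have "(\<lambda>n. EE R w n (\<lambda>P. if coal_manip (plu_winner tb) m P then 0 else 1)) \<longlonglongrightarrow> 0"
    proof (rule good_tendsto[where I="{1..m}" and g=g])
      fix i assume i: "i \<in> {1..m}"
      show "(\<Sum>r\<in>R. w r * g i r) > 0"
      proof (cases "i = 1")
        case True
        have "(\<Sum>r\<in>R. w r * g i r) = (1-\<theta>)/2 - (\<theta> + (1-\<theta>)/m)"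
          using True m by (simp add: g_def sum_w_diff mh mp)
        also have "\<dots> = (real m - 2 - \<theta> * (3 * real m - 2)) / (2 * real m)"
          using mpos by (simp add: field_simps)
        also have "\<dots> > 0" using key mpos by (intro divide_pos_pos) auto
        finally show ?thesis .
      next
        case False
        then show ?thesis using i diff1[of i] assms(2) by (simp add: g_def)
      qed
    next
      fix n P assume P: "P \<in> LL R n" and pos: "\<forall>i\<in>{1..m}. sum_list (map (g i) P) > 0"
      have P': "P \<in> profiles m n" using P LLp by simp
      have H1: "\<forall>c\<in>{2..m}. plu_score P c < plu_score P 1"
      proof
        fix c assume c: "c \<in> {2..m}"
        then have "sum_list (map (g c) P) > 0" using pos by auto
        then show "plu_score P c < plu_score P 1" using c
          by (simp add: g_def sum_list_diff sh)
      qed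
      have "sum_list (map (g 1) P) > 0" using pos m by auto
      then have H2: "plu_score P 1 < length (filter (\<lambda>r. prefers r 2 1) P)"
        by (simp add: g_def sum_list_diff sh sp)
      show "coal_manip (plu_winner tb) m P" by (rule isCM[OF m tb P' H1 H2])
    qed simp
    then have "(\<lambda>n. 1 - EE R w n (\<lambda>P. if coal_manip (plu_winner tb) m P then 0 else 1)) \<longlonglongrightarrow> 1 - 0"
      by (intro tendsto_intros)
    then show "(\<lambda>n. cm_rate (plu_winner tb) m n \<theta>) \<longlonglongrightarrow> 1"
      by (simp add: cm compl_EE)
  next
    assume gt: "\<theta> > theta_c_plu m"
    then have key: "\<theta> * (3 * real m - 2) > real m - 2"
      unfolding theta_c_plu_def using d1 by (simp add: pos_divide_less_eq)
    define g :: "nat \<times> bool \<Rightarrow> nat list \<Rightarrow> real" where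
      "g i = (if snd i then (\<lambda>r. hI 1 r - hI (fst i) r) else (\<lambda>r. hI 1 r - pI (fst i) r))" for i
    have "(\<lambda>n. EE R w n (\<lambda>P. if \<not> coal_manip (plu_winner tb) m P then 0 else 1)) \<longlonglongrightarrow> 0"
    proof (rule good_tendsto[where I="{2..m} \<times> UNIV" and g=g])
      fix i assume i: "i \<in> {2..m} \<times> (UNIV :: bool set)"
      show "(\<Sum>r\<in>R. w r * g i r) > 0"
      proof (cases "snd i")
        case True
        then show ?thesis using i diff1[of "fst i"] assms(2) by (auto simp: g_def)
      next
        case False
        have "(\<Sum>r\<in>R. w r * g i r) = (\<theta> + (1-\<theta>)/m) - (1-\<theta>)/2"
          using False i m by (auto simp: g_def sum_w_diff mh mp)
        also have "\<dots> = (\<theta> * (3 * real m - 2) - (real m - 2)) / (2 * real m)"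
          using mpos by (simp add: field_simps)
        also have "\<dots> > 0" using key mpos by (intro divide_pos_pos) auto
        finally show ?thesis .
      qed
    next
      fix n P assume P: "P \<in> LL R n" and pos: "\<forall>i\<in>{2..m} \<times> UNIV. sum_list (map (g i) P) > 0"
      have P': "P \<in> profiles m n" using P LLp by simp
      have H: "\<forall>c\<in>{2..m}. plu_score P c < plu_score P 1 \<and>
                length (filter (\<lambda>r. prefers r c 1) P) < plu_score P 1"
      proof
        fix c assume c: "c \<in> {2..m}"
        then have "sum_list (map (g (c, True)) P) > 0" "sum_list (map (g (c, False)) P) > 0"
          using pos by auto
        then show "plu_score P c < plu_score P 1 \<and>
                length (filter (\<lambda>r. prefers r c 1) P) < plu_score P 1"
          by (simp add: g_def sum_list_diff sh sp)
      qed
      show "\<not> coal_manip (plu_winner tb) m P" by (rule notCM[OF m tb P' H])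
    qed simp
    moreover have "(\<lambda>P. if \<not> coal_manip (plu_winner tb) m P then 0 else 1)
        = (\<lambda>P. if coal_manip (plu_winner tb) m P then 1 else (0::real))" by auto
    ultimately show "(\<lambda>n. cm_rate (plu_winner tb) m n \<theta>) \<longlonglongrightarrow> 0"
      by (simp add: cm)
  qed
qed

end
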